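(* Let $\mathcal{L}_1,\mathcal{L}_2\in\mathrm{Mat}_d(\mathbb{Z})$ be irreducible and coprime with $|\det\mathcal{L}_1|=p$, $|\det\mathcal{L}_2|=q$. Let $\Lambda=\mathbb{Z}^d\cap \mathcal{L}_1^{-1}\mathcal{L}_2 \mathbb{Z}^d\cap \mathcal{L}_2^{-1}\mathcal{L}_1 \mathbb{Z}^d$ and $\Gamma_1=\Lambda\cap \mathcal{L}_2^{-1}\mathcal{L}_1\Lambda$. Then $\mathcal{L}_1$ and $\mathcal{L}_2$ induce well-defined group homomorphisms $$\phi_1,\phi_2:\mathbb{Z}^d/\Gamma_1\to \mathbb{Z}^d/\mathcal{L}_1\Lambda,\qquad \phi_i(x+\Gamma_1)=\mathcal{L}_ix+\mathcal{L}_1\Lambda,$$ of finite abelian groups, and $\phi_1+\phi_2$ is an isomorphism. (In particular $\Gamma_1$ has index $p^2q$ in $\mathbb{Z}^d$.)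
   Context: Irreducible: there are no non-trivial subspaces $U,V$ of $\mathbb{Q}^d$ of the same dimension with $\mathcal{L}_1U\subseteq V$ and $\mathcal{L}_2U\subseteq V$. Coprime: there are no $\mathcal{P},\mathcal{Q}\in \mathrm{GL}_d(\mathbb{Q})$ with $0<|\det(\mathcal{P})\det(\mathcal{Q})|<1$ such that $\mathcal{P}\mathcal{L}_1\mathcal{Q},\mathcal{P}\mathcal{L}_2\mathcal{Q}\in\mathrm{Mat}_d(\mathbb{Z})$. Under these hypotheses $\Lambda$ is a lattice of index $pq$ in $\mathbb{Z}^d$. *)

theory Defs
  imports "HOL-Analysis.Analysis"
begin

text \<open>Vectors in Q^d / Z^d are \<open>rat ^ 'n\<close> / \<open>int ^ 'n\<close>, d = CARD('n).\<close>

definition qscale :: "rat \<Rightarrow> rat ^ 'n \<Rightarrow> rat ^ 'n" where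
  "qscale c x = (\<chi> i. c * x $ i)"

lemma vector_space_qscale: "vector_space qscale"
  by unfold_locales (auto simp: qscale_def vec_eq_iff algebra_simps)

text \<open>Q-linear subspaces of Q^d and their dimension.\<close>
abbreviation qsubspace :: "(rat ^ 'n) set \<Rightarrow> bool" where
  "qsubspace U \<equiv> module.subspace qscale U"

abbreviation qdim :: "(rat ^ 'n) set \<Rightarrow> nat" where
  "qdim U \<equiv> vector_space.dim qscale U"

definition to_rat_mat :: "int ^ 'n ^ 'n \<Rightarrow> rat ^ 'n ^ 'n" where
  "to_rat_mat L = (\<chi> i j. of_int (L $ i $ j))"

definition irreducible_pair :: "int ^ 'n ^ 'n \<Rightarrow> int ^ 'n ^ 'n \<Rightarrow> bool" where
  "irreducible_pair L1 L2 \<longleftrightarrow>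
     \<not> (\<exists>U V :: (rat ^ 'n) set.
          qsubspace U \<and> qsubspace V \<and>
          U \<noteq> {0} \<and> U \<noteq> UNIV \<and> V \<noteq> {0} \<and> V \<noteq> UNIV \<and>
          qdim U = qdim V \<and>
          (\<lambda>x. to_rat_mat L1 *v x) ` U \<subseteq> V \<and>
          (\<lambda>x. to_rat_mat L2 *v x) ` U \<subseteq> V)"

definition int_matrix :: "rat ^ 'n ^ 'n \<Rightarrow> bool" where
  "int_matrix M \<longleftrightarrow> (\<forall>i j. M $ i $ j \<in> \<int>)"

definition coprime_pair :: "int ^ 'n ^ 'n \<Rightarrow> int ^ 'n ^ 'n \<Rightarrow> bool" where
  "coprime_pair L1 L2 \<longleftrightarrow>
     \<not> (\<exists>P Q :: rat ^ 'n ^ 'n.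
          invertible P \<and> invertible Q \<and>
          0 < \<bar>det P * det Q\<bar> \<and> \<bar>det P * det Q\<bar> < 1 \<and>
          int_matrix (P ** to_rat_mat L1 ** Q) \<and>
          int_matrix (P ** to_rat_mat L2 ** Q))"

text \<open>\<open>Lambda = Z^d \<inter> L1^{-1} L2 Z^d \<inter> L2^{-1} L1 Z^d\<close>; for invertible L1, L2,
  \<open>x \<in> L1^{-1} L2 Z^d\<close> iff \<open>L1 x \<in> L2 Z^d\<close>.\<close>
definition Lam :: "int ^ 'n ^ 'n \<Rightarrow> int ^ 'n ^ 'n \<Rightarrow> (int ^ 'n) set" where
  "Lam L1 L2 = {x. (\<exists>y. L1 *v x = L2 *v y) \<and> (\<exists>y. L2 *v x = L1 *v y)}"

text \<open>\<open>Gamma1 = Lambda \<inter> L2^{-1} L1 Lambda\<close>.\<close>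
definition Gamma1 :: "int ^ 'n ^ 'n \<Rightarrow> int ^ 'n ^ 'n \<Rightarrow> (int ^ 'n) set" where
  "Gamma1 L1 L2 = {x \<in> Lam L1 L2. \<exists>y \<in> Lam L1 L2. L2 *v x = L1 *v y}"

text \<open>The set of cosets \<open>Z^d / G\<close> of a subgroup \<open>G\<close> of \<open>Z^d\<close>.\<close>
definition cosets :: "(int ^ 'n) set \<Rightarrow> (int ^ 'n) set set" where
  "cosets G = {(\<lambda>g. x + g) ` G | x. True}"

end

theory Submission
  imports Defs "HOL-Library.FuncSet"
begin


lemma quot_bij:
  assumes "\<And>x y. f x = f y \<longleftrightarrow> g x = g y"
  shows "bij_betw (\<lambda>c. g (SOME x. f x = c)) (range f) (range g)"
proof -
  have k: "g (SOME x. f x = f y) = g y" for y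
  proof -
    have "f (SOME x. f x = f y) = f y" by (rule someI) (rule refl)
    then show ?thesis using assms by blast
  qed
  show ?thesis
    unfolding bij_betw_def
  proof
    show "inj_on (\<lambda>c. g (SOME x. f x = c)) (range f)"
    proof (rule inj_onI)
      fix a b assume "a \<in> range f" "b \<in> range f"
        and e: "g (SOME x. f x = a) = g (SOME x. f x = b)"
      then obtain y1 y2 where "a = f y1" "b = f y2" by blast
      with e k have "g y1 = g y2" by simp
      with assms \<open>a = f y1\<close> \<open>b = f y2\<close> show "a = b" by simp
    qed
    show "(\<lambda>c. g (SOME x. f x = c)) ` range f = range g"
    proof
      show "(\<lambda>c. g (SOME x. f x = c)) ` range f \<subseteq> range g" by auto
      show "range g \<subseteq> (\<lambda>c. g (SOME x. f x = c)) ` range f"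
      proof
        fix z assume "z \<in> range g"
        then obtain y where "z = g y" by blast
        then have "z = g (SOME x. f x = f y)" using k by simp
        then show "z \<in> (\<lambda>c. g (SOME x. f x = c)) ` range f" by blast
      qed
    qed
  qed
qed

lemma quot_card:
  assumes "\<And>x y. f x = f y \<longleftrightarrow> g x = g y"
  shows "card (range f) = card (range g) \<and> (finite (range f) \<longleftrightarrow> finite (range g))"
proof -
  have b: "bij_betw (\<lambda>c. g (SOME x. f x = c)) (range f) (range g)" by (rule quot_bij[OF assms])
  show ?thesis using bij_betw_same_card[OF b] bij_betw_finite[OF b] by blast
qed

definition sg :: "('a::ab_group_add) set \<Rightarrow> bool" where
  "sg H \<longleftrightarrow> 0 \<in> H \<and> (\<forall>x\<in>H. \<forall>y\<in>H. x - y \<in> H)"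

lemma sg_0: "sg H \<Longrightarrow> 0 \<in> H" by (simp add: sg_def)
lemma sg_diff: "sg H \<Longrightarrow> x \<in> H \<Longrightarrow> y \<in> H \<Longrightarrow> x - y \<in> H" by (simp add: sg_def)
lemma sg_uminus: "sg H \<Longrightarrow> x \<in> H \<Longrightarrow> - x \<in> H"
proof -
  assume a: "sg H" "x \<in> H"
  have "0 - x \<in> H" using sg_diff[OF a(1) sg_0[OF a(1)] a(2)] .
  then show ?thesis by simp
qed
lemma sg_add: "sg H \<Longrightarrow> x \<in> H \<Longrightarrow> y \<in> H \<Longrightarrow> x + y \<in> H"
proof -
  assume a: "sg H" "x \<in> H" "y \<in> H"
  have "x - (- y) \<in> H" using sg_diff[OF a(1) a(2) sg_uminus[OF a(1) a(3)]] .
  then show ?thesis by simp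
qed

lemma cosets_range: "cosets H = range (\<lambda>x. (\<lambda>g. x + g) ` H)"
  by (auto simp: cosets_def)

lemma coset_eq:
  assumes "sg H"
  shows "((\<lambda>g. x + g) ` H = (\<lambda>g. y + g) ` H) \<longleftrightarrow> x - y \<in> (H::('a::ab_group_add) set)"
proof
  assume e: "(\<lambda>g. x + g) ` H = (\<lambda>g. y + g) ` H"
  have "x \<in> (\<lambda>g. x + g) ` H" using sg_0[OF assms] by force
  then obtain g where "g \<in> H" "x = y + g" using e by auto
  then show "x - y \<in> H" by simp
next
  assume d: "x - y \<in> H"
  show "(\<lambda>g. x + g) ` H = (\<lambda>g. y + g) ` H"
  proof (auto simp: image_iff)
    fix g assume "g \<in> H"
    then show "\<exists>h\<in>H. x + g = y + h" using sg_add[OF assms d] by (intro bexI[of _ "(x - y) + g"]) auto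
  next
    fix g assume "g \<in> H"
    have "g - (x - y) \<in> H" using sg_diff[OF assms \<open>g\<in>H\<close> d] .
    then show "\<exists>h\<in>H. y + g = x + h" by (intro bexI[of _ "g - (x - y)"]) auto
  qed
qed

lemma card_cosets_map:
  assumes "sg H" "\<And>x y. f x = f y \<longleftrightarrow> x - y \<in> H"
  shows "card (cosets H) = card (range f) \<and> (finite (cosets H) \<longleftrightarrow> finite (range f))"
proof -
  have "\<And>x y. ((\<lambda>g. x + g) ` H = (\<lambda>g. y + g) ` H) \<longleftrightarrow> f x = f y"
    using coset_eq[OF assms(1)] assms(2) by simp
  then show ?thesis unfolding cosets_range by (rule quot_card)
qed



lemma vec_smult_mv: "(M :: 'a::comm_ring_1^'n^'m) *v (c *s x) = c *s (M *v x)"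
  by (simp add: vector_scalar_mult_def matrix_vector_mult_def vec_eq_iff sum_distrib_left mult_ac)

lemma sg_int_smult:
  assumes "sg H" "x \<in> H"
  shows "(c::int) *s x \<in> (H :: (int^'n) set)"
proof -
  have nat: "int n *s x \<in> H" for n
  proof (induction n)
    case 0
    have "int 0 *s x = 0" by (simp add: vector_scalar_mult_def vec_eq_iff)
    then show ?case using sg_0[OF assms(1)] by simp
  next
    case (Suc n)
    have "int (Suc n) *s x = int n *s x + x"
      by (simp add: vector_scalar_mult_def vec_eq_iff algebra_simps)
    then show ?case using sg_add[OF assms(1) Suc assms(2)] by (simp add: add.commute)
  qed
  show ?thesis
  proof (cases "c \<ge> 0")
    case True
    then have "c = int (nat c)" by simp
    then show ?thesis using nat[of "nat c"] by simp
  next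
    case False
    then have e: "c *s x = - (int (nat (-c)) *s x)"
      by (simp add: vector_scalar_mult_def vec_eq_iff)
    show ?thesis unfolding e by (rule sg_uminus[OF assms(1) nat])
  qed
qed

lemma sg_sum:
  assumes "sg H" "finite S" "\<And>j. j \<in> S \<Longrightarrow> f j \<in> H"
  shows "sum f S \<in> H"
  using assms(2,3)
proof (induction S rule: finite_induct)
  case empty
  then show ?case using sg_0[OF assms(1)] by simp
next
  case (insert a F)
  then show ?case using sg_add[OF assms(1)] by simp
qed

lemma det_tri:
  fixes A :: "'a::comm_ring_1^'n^'n" and ix :: "'n \<Rightarrow> nat"
  assumes inj: "inj ix" and ld: "\<And>i j. ix j < ix i \<Longrightarrow> A$i$j = 0"
  shows "det A = prod (\<lambda>i. A$i$i) UNIV"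
proof -
  let ?U = "UNIV :: 'n set"
  let ?PU = "{p. p permutes ?U}"
  let ?pp = "\<lambda>p. of_int (sign p) * prod (\<lambda>i. A$i$p i) ?U"
  have id0: "{id} \<subseteq> ?PU" by (auto simp: permutes_id)
  have p0: "\<forall>p \<in> ?PU - {id}. ?pp p = 0"
  proof
    fix p assume p: "p \<in> ?PU - {id}"
    then have pp: "p permutes ?U" and pid: "p \<noteq> id" by auto
    have "\<exists>i. ix (p i) < ix i"
    proof (rule ccontr)
      assume "\<not> ?thesis"
      then have le: "\<And>i. ix i \<le> ix (p i)" by (simp add: not_less)
      have "sum ix ?U = sum (ix \<circ> p) ?U" by (rule sum.permute[OF pp])
      then have eqs: "sum ix ?U = sum (\<lambda>i. ix (p i)) ?U" by simp
      have "ix i = ix (p i)" for i by (rule sum_mono_inv[OF eqs le]) auto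
      then have "p i = i" for i using inj by (metis injD)
      then show False using pid by auto
    qed
    then obtain i where i: "ix (p i) < ix i" by blast
    from ld[OF i] have "A$i$p i = 0" .
    then have "prod (\<lambda>i. A$i$p i) ?U = 0" by (intro prod_zero) auto
    then show "?pp p = 0" by simp
  qed
  from sum.mono_neutral_cong_left[OF finite_permutations[OF finite_class.finite_UNIV] id0 p0] show ?thesis
    unfolding det_def by (simp add: sign_id)
qed

lemma card_vec_box:
  assumes "\<And>j. finite (S j)"
  shows "card {x::'a^'n. \<forall>j. x$j \<in> S j} = (\<Prod>j\<in>UNIV. card (S j)) \<and> finite {x::'a^'n. \<forall>j. x$j \<in> S j}"
proof -
  have b: "bij_betw vec_nth {x::'a^'n. \<forall>j. x$j \<in> S j} (PiE UNIV S)"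
    unfolding bij_betw_def
  proof
    show "inj_on vec_nth {x::'a^'n. \<forall>j. x$j \<in> S j}" by (auto simp: inj_on_def vec_eq_iff)
    show "vec_nth ` {x::'a^'n. \<forall>j. x$j \<in> S j} = PiE UNIV S"
    proof
      show "vec_nth ` {x::'a^'n. \<forall>j. x$j \<in> S j} \<subseteq> PiE UNIV S" by (auto simp: PiE_def)
      show "PiE UNIV S \<subseteq> vec_nth ` {x::'a^'n. \<forall>j. x$j \<in> S j}"
      proof
        fix f assume f: "f \<in> PiE UNIV S"
        have "f = vec_nth (vec_lambda f)" by (rule ext) simp
        moreover have "vec_lambda f \<in> {x::'a^'n. \<forall>j. x$j \<in> S j}" using f by (auto simp: PiE_def)
        ultimately show "f \<in> vec_nth ` {x::'a^'n. \<forall>j. x$j \<in> S j}" by blast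
      qed
    qed
  qed
  have "finite (PiE UNIV S)" using assms by (intro finite_PiE) auto
  then show ?thesis using bij_betw_same_card[OF b] bij_betw_finite[OF b] card_PiE[of UNIV S] by simp
qed



locale lat =
  fixes H :: "(int^'n) set" and N :: int and ix :: "'n \<Rightarrow> nat"
  assumes sgH: "sg H" and Npos: "N > 0" and NH: "\<And>x. N *s x \<in> H"
    and bij: "bij_betw ix UNIV {0..<CARD('n)}"
begin

definition "sig k = inv_into UNIV ix k"
definition "Z k = {x::int^'n. \<forall>j. k \<le> ix j \<longrightarrow> x$j = 0}"
definition "g k = (LEAST t::nat. t > 0 \<and> (\<exists>x\<in>H \<inter> Z (Suc k). x $ sig k = int t))"
definition "b k = (SOME x. x \<in> H \<inter> Z (Suc k) \<and> x $ sig k = int (g k))"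
definition "M = (\<chi> i j. b (ix j) $ i)"
definition "R = {x::int^'n. \<forall>j. x$j \<in> {0..<int (g (ix j))}}"

lemma inj_ix: "inj ix" using bij by (simp add: bij_betw_def)
lemma ix_lt: "ix j < CARD('n)" using bij by (auto simp: bij_betw_def)
lemma sig_ix: "sig (ix j) = j" unfolding sig_def using inj_ix by simp
lemma ix_sig: "k < CARD('n) \<Longrightarrow> ix (sig k) = k"
  unfolding sig_def using bij by (metis atLeastLessThan_iff bij_betw_def f_inv_into_f zero_le)

lemma Z0: "Z 0 = {0}" by (auto simp: Z_def vec_eq_iff)
lemma Zd: "Z (CARD('n)) = UNIV" using ix_lt by (auto simp: Z_def not_le[symmetric])
lemma Z_down:
  assumes "k < CARD('n)" "x \<in> Z (Suc k)" "x $ sig k = 0"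
  shows "x \<in> Z k"
  unfolding Z_def
proof (intro CollectI allI impI)
  fix j assume "k \<le> ix j"
  then consider "ix j = k" | "Suc k \<le> ix j" by linarith
  then show "x$j = 0"
  proof cases
    case 1
    then have "j = sig k" using sig_ix by metis
    then show ?thesis using assms(3) by simp
  next
    case 2 then show ?thesis using assms(2) by (simp add: Z_def)
  qed
qed

lemma g_prop:
  assumes "k < CARD('n)"
  shows "g k > 0 \<and> (\<exists>x\<in>H \<inter> Z (Suc k). x $ sig k = int (g k))"
proof -
  let ?P = "\<lambda>t::nat. t > 0 \<and> (\<exists>x\<in>H \<inter> Z (Suc k). x $ sig k = int t)"
  let ?w = "N *s axis (sig k) 1"
  have h1: "?w \<in> H" by (rule NH)
  have h2: "?w \<in> Z (Suc k)"
    using ix_sig[OF assms] by (auto simp: Z_def vector_scalar_mult_def axis_def)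
  have h3: "?w $ sig k = int (nat N)" using Npos by (simp add: vector_scalar_mult_def axis_def)
  have "?P (nat N)"
  proof (intro conjI)
    show "nat N > 0" using Npos by simp
    show "\<exists>x\<in>H \<inter> Z (Suc k). x $ sig k = int (nat N)" using h1 h2 h3 by blast
  qed
  then have "?P (g k)" unfolding g_def by (rule LeastI)
  then show ?thesis .
qed

lemma g_least:
  assumes "t > 0" "x \<in> H" "x \<in> Z (Suc k)" "x $ sig k = int t"
  shows "g k \<le> t"
  unfolding g_def by (rule Least_le) (use assms in blast)

lemma b_prop:
  assumes "k < CARD('n)"
  shows "b k \<in> H" "b k \<in> Z (Suc k)" "b k $ sig k = int (g k)"
proof -
  have "\<exists>x. x \<in> H \<inter> Z (Suc k) \<and> x $ sig k = int (g k)" using g_prop[OF assms] by blast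
  then have "b k \<in> H \<inter> Z (Suc k) \<and> b k $ sig k = int (g k)" unfolding b_def by (rule someI_ex)
  then show "b k \<in> H" "b k \<in> Z (Suc k)" "b k $ sig k = int (g k)" by auto
qed

lemma Z_diff: "x \<in> Z k \<Longrightarrow> y \<in> Z k \<Longrightarrow> x - y \<in> Z k"
  by (auto simp: Z_def)
lemma Z_add: "x \<in> Z k \<Longrightarrow> y \<in> Z k \<Longrightarrow> x + y \<in> Z k"
  by (auto simp: Z_def)
lemma Z_smult: "x \<in> Z k \<Longrightarrow> c *s x \<in> Z k"
  by (auto simp: Z_def vector_scalar_mult_def)

lemma g_dvd:
  assumes k: "k < CARD('n)" and x: "x \<in> H" "x \<in> Z (Suc k)"
  shows "int (g k) dvd x $ sig k"
proof -
  let ?c = "sig k" and ?G = "int (g k)"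
  have G: "?G > 0" using g_prop[OF k] by simp
  let ?y = "x - (x $ ?c div ?G) *s b k"
  have yH: "?y \<in> H" using sg_diff[OF sgH x(1) sg_int_smult[OF sgH b_prop(1)[OF k]]] .
  have yZ: "?y \<in> Z (Suc k)" using Z_diff[OF x(2) Z_smult[OF b_prop(2)[OF k]]] .
  have yc: "?y $ ?c = x $ ?c mod ?G"
    using b_prop(3)[OF k] by (simp add: vector_scalar_mult_def minus_div_mult_eq_mod[symmetric] mult.commute)
  show ?thesis
  proof (rule ccontr)
    assume nd: "\<not> ?thesis"
    then have m0: "x $ ?c mod ?G \<noteq> 0" by (simp add: dvd_eq_mod_eq_0)
    have "x $ ?c mod ?G \<ge> 0" using G by simp
    then have mpos: "x $ ?c mod ?G > 0" using m0 by linarith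
    have mlt: "x $ ?c mod ?G < ?G" using G by simp
    have "g k \<le> nat (x $ ?c mod ?G)"
      by (rule g_least[OF _ yH yZ]) (use mpos yc in auto)
    then show False using mlt mpos by linarith
  qed
qed

lemma M_axis: "M *v axis j 1 = b (ix j)"
  by (simp add: M_def matrix_vector_mult_def axis_def vec_eq_iff if_distrib cong: if_cong)

lemma M_sum: "M *v y = sum (\<lambda>j. y$j *s b (ix j)) UNIV"
  by (simp add: M_def matrix_vector_mult_def vec_eq_iff sum_component vector_scalar_mult_def mult.commute)

lemma range_M_sub: "M *v y \<in> H"
  unfolding M_sum
  by (rule sg_sum[OF sgH]) (auto intro: sg_int_smult[OF sgH] b_prop(1) ix_lt)

lemma span_step:
  assumes "k \<le> CARD('n)" "x \<in> H" "x \<in> Z k"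
  shows "\<exists>y. M *v y = x"
  using assms
proof (induction k arbitrary: x)
  case 0
  then have "x = 0" using Z0 by auto
  then show ?case by (intro exI[of _ 0]) simp
next
  case (Suc k)
  have k: "k < CARD('n)" using Suc.prems by simp
  let ?c = "sig k" and ?G = "int (g k)"
  obtain t where t: "x $ ?c = t * ?G" using g_dvd[OF k Suc.prems(2,3)] by (auto simp: dvd_def mult.commute)
  let ?x' = "x - t *s b k"
  have x'H: "?x' \<in> H" using sg_diff[OF sgH Suc.prems(2) sg_int_smult[OF sgH b_prop(1)[OF k]]] .
  have x'Z: "?x' \<in> Z (Suc k)" using Z_diff[OF Suc.prems(3) Z_smult[OF b_prop(2)[OF k]]] .
  have "?x' $ ?c = 0" using t b_prop(3)[OF k] by (simp add: vector_scalar_mult_def)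
  then have "?x' \<in> Z k" using Z_down[OF k x'Z] by simp
  then obtain y' where y': "M *v y' = ?x'" using Suc.IH[of ?x'] Suc.prems(1) x'H by auto
  have "M *v (y' + t *s axis ?c 1) = ?x' + t *s b k"
    by (simp add: matrix_vector_right_distrib vec_smult_mv M_axis y' ix_sig[OF k])
  then show ?case by (intro exI[of _ "y' + t *s axis ?c 1"]) simp
qed

lemma range_M: "range ((*v) M) = H"
proof
  show "range ((*v) M) \<subseteq> H" using range_M_sub by auto
  show "H \<subseteq> range ((*v) M)"
  proof
    fix x assume "x \<in> H"
    then obtain y where "M *v y = x" using span_step[of "CARD('n)" x] Zd by auto
    then show "x \<in> range ((*v) M)" by (metis rangeI)
  qed
qed

end


context lat begin

lemma zero_R: "0 \<in> R"
  using g_prop[OF ix_lt] by (auto simp: R_def)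

lemma reps_exist:
  assumes "k \<le> CARD('n)" "x \<in> Z k"
  shows "\<exists>r\<in>R \<inter> Z k. x - r \<in> H"
  using assms
proof (induction k arbitrary: x)
  case 0
  then have "x = 0" using Z0 by auto
  then show ?case using zero_R Z0 sg_0[OF sgH] by auto
next
  case (Suc k)
  have k: "k < CARD('n)" using Suc.prems by simp
  let ?c = "sig k" and ?G = "int (g k)"
  have G: "?G > 0" using g_prop[OF k] by simp
  define t where "t = x $ ?c div ?G"
  define x1 where "x1 = x - t *s b k"
  define m where "m = x1 $ ?c"
  define x2 where "x2 = x1 - m *s axis ?c 1"
  have x1Z: "x1 \<in> Z (Suc k)" unfolding x1_def using Z_diff[OF Suc.prems(2) Z_smult[OF b_prop(2)[OF k]]] .
  have m: "m = x $ ?c mod ?G" unfolding m_def x1_def t_def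
    using b_prop(3)[OF k] by (simp add: vector_scalar_mult_def minus_div_mult_eq_mod[symmetric] mult.commute)
  have m0: "0 \<le> m" "m < ?G" using G m by auto
  have axZ: "axis ?c 1 \<in> Z (Suc k)" using ix_sig[OF k] by (auto simp: Z_def axis_def)
  have x2Z: "x2 \<in> Z (Suc k)" unfolding x2_def using Z_diff[OF x1Z Z_smult[OF axZ]] .
  have "x2 $ ?c = 0" unfolding x2_def m_def by (simp add: vector_scalar_mult_def axis_def)
  then have x2Zk: "x2 \<in> Z k" using Z_down[OF k x2Z] by simp
  obtain r2 where r2: "r2 \<in> R" "r2 \<in> Z k" "x2 - r2 \<in> H" using Suc.IH[OF _ x2Zk] k by auto
  define r where "r = r2 + m *s axis ?c 1"
  have r2c: "r2 $ ?c = 0" using r2(2) ix_sig[OF k] by (simp add: Z_def)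
  have rR: "r \<in> R"
    unfolding R_def
  proof (intro CollectI allI)
    fix j
    show "r $ j \<in> {0..<int (g (ix j))}"
    proof (cases "j = ?c")
      case True
      then show ?thesis using r2c m0 ix_sig[OF k] by (simp add: r_def vector_scalar_mult_def axis_def)
    next
      case False
      then show ?thesis using r2(1) by (simp add: r_def vector_scalar_mult_def axis_def R_def)
    qed
  qed
  have r2Z: "r2 \<in> Z (Suc k)" using r2(2) by (auto simp: Z_def)
  have rZ: "r \<in> Z (Suc k)" unfolding r_def using Z_add[OF r2Z Z_smult[OF axZ]] .
  have "x - r = (x2 - r2) + t *s b k" unfolding r_def x2_def x1_def by simp
  then have "x - r \<in> H" using sg_add[OF sgH r2(3) sg_int_smult[OF sgH b_prop(1)[OF k]]] by simp
  then show ?case using rR rZ by blast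
qed

lemma reps_unique:
  assumes r: "r \<in> R" and r': "r' \<in> R" and d: "r - r' \<in> H"
  shows "r = r'"
proof -
  let ?D = "r - r'"
  have "m \<le> CARD('n) \<longrightarrow> ?D \<in> Z (CARD('n) - m)" for m
  proof (induction m)
    case 0 then show ?case using Zd by simp
  next
    case (Suc m)
    show ?case
    proof
      assume sm: "Suc m \<le> CARD('n)"
      define k where "k = CARD('n) - Suc m"
      have k: "k < CARD('n)" and sk: "Suc k = CARD('n) - m" using sm by (auto simp: k_def)
      have DZ: "?D \<in> Z (Suc k)" using Suc.IH sm sk by simp
      let ?c = "sig k" and ?G = "int (g k)"
      have dv: "?G dvd ?D $ ?c" by (rule g_dvd[OF k d DZ])
      have "r $ ?c \<in> {0..<?G}" "r' $ ?c \<in> {0..<?G}"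
        using r r' ix_sig[OF k] unfolding R_def by (metis (mono_tags, lifting) mem_Collect_eq)+
      then have lt: "\<bar>?D $ ?c\<bar> < ?G" by auto
      have "?D $ ?c = 0"
      proof (rule ccontr)
        assume "?D $ ?c \<noteq> 0"
        then have "\<bar>?G\<bar> \<le> \<bar>?D $ ?c\<bar>" using dvd_imp_le_int dv by blast
        then show False using lt by simp
      qed
      then have "?D \<in> Z k" using Z_down[OF k DZ] by simp
      then show "?D \<in> Z (CARD('n) - Suc m)" by (simp add: k_def)
    qed
  qed
  from this[of "CARD('n)"] have "?D \<in> Z 0" by simp
  then show ?thesis using Z0 by simp
qed

definition "rep x = (THE r. r \<in> R \<and> x - r \<in> H)"

lemma rep: "rep x \<in> R \<and> x - rep x \<in> H"
proof -
  obtain r where r: "r \<in> R" "x - r \<in> H" using reps_exist[of "CARD('n)" x] Zd by auto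
  have "\<exists>!r. r \<in> R \<and> x - r \<in> H"
  proof (rule ex1I[of _ r])
    show "r \<in> R \<and> x - r \<in> H" using r by simp
    fix r' assume r': "r' \<in> R \<and> x - r' \<in> H"
    have h: "(x - r) - (x - r') \<in> H" using sg_diff[OF sgH r(2)] r' by blast
    have "(x - r) - (x - r') = r' - r" by simp
    then have "r' - r \<in> H" using h by simp
    then show "r' = r" using reps_unique r r' by blast
  qed
  then show ?thesis unfolding rep_def by (rule theI')
qed

lemma rep_eq: "rep x = rep y \<longleftrightarrow> x - y \<in> H"
proof
  assume e: "rep x = rep y"
  have "x - y = (x - rep x) - (y - rep y)" using e by simp
  then show "x - y \<in> H" using sg_diff[OF sgH] rep by metis
next
  assume xy: "x - y \<in> H"
  have "rep x - rep y = (x - rep y) - (x - rep x)" by simp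
  moreover have "x - rep y = (x - y) + (y - rep y)" by simp
  ultimately have "rep x - rep y \<in> H" using sg_add[OF sgH xy] sg_diff[OF sgH] rep by metis
  then show "rep x = rep y" using reps_unique rep by blast
qed

lemma range_rep: "range rep = R"
proof
  show "range rep \<subseteq> R" using rep by auto
  show "R \<subseteq> range rep"
  proof
    fix r assume r: "r \<in> R"
    have "r - rep r \<in> H" using rep by blast
    then have "r = rep r" using reps_unique[OF r] rep by blast
    then show "r \<in> range rep" by (metis rangeI)
  qed
qed

lemma card_R: "card R = (\<Prod>j\<in>UNIV. g (ix j)) \<and> finite R"
  using card_vec_box[of "\<lambda>j. {0..<int (g (ix j))}"] unfolding R_def by simp

lemma cosets_card: "card (cosets H) = (\<Prod>j\<in>UNIV. g (ix j)) \<and> finite (cosets H)"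
  using card_cosets_map[OF sgH rep_eq] range_rep card_R by simp

lemma det_M: "det M = (\<Prod>j\<in>UNIV. int (g (ix j)))"
proof -
  have "det M = prod (\<lambda>i. M$i$i) UNIV"
  proof (rule det_tri[OF inj_ix])
    fix i j assume "ix j < ix i"
    then have "Suc (ix j) \<le> ix i" by simp
    then show "M$i$j = 0" using b_prop(2)[OF ix_lt[of j]] by (simp add: M_def Z_def)
  qed
  also have "\<dots> = (\<Prod>j\<in>UNIV. int (g (ix j)))"
    by (rule prod.cong) (auto simp: M_def b_prop(3)[OF ix_lt, unfolded sig_ix])
  finally show ?thesis .
qed

end

theorem lattice_basis:
  fixes H :: "(int^'n) set"
  assumes "sg H" "N > 0" "\<And>x. N *s x \<in> H"
  shows "\<exists>M. range ((*v) M) = H \<and> finite (cosets H) \<and> int (card (cosets H)) = det M"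
proof -
  obtain ix where ix: "bij_betw ix (UNIV::'n set) {0..<CARD('n)}"
    using ex_bij_betw_finite_nat[of "UNIV::'n set"] by auto
  interpret lat H N ix using assms ix by unfold_locales auto
  show ?thesis
    using range_M cosets_card det_M by (intro exI[of _ M]) simp
qed



definition ofv :: "int^'n \<Rightarrow> rat^'n" where "ofv x = (\<chi> i. of_int (x$i))"

lemma ofv_inj: "ofv x = ofv y \<longleftrightarrow> x = y"
  by (simp add: ofv_def vec_eq_iff)

lemma rat_mv: "to_rat_mat M *v ofv x = ofv (M *v x)"
  by (simp add: to_rat_mat_def ofv_def matrix_vector_mult_def vec_eq_iff)

lemma rat_mm: "to_rat_mat (M ** N) = to_rat_mat M ** to_rat_mat N"
  by (simp add: to_rat_mat_def matrix_matrix_mult_def vec_eq_iff)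

lemma det_rat: "det (to_rat_mat M) = of_int (det M)"
  by (simp add: det_def to_rat_mat_def of_int_sum of_int_prod)

lemma ofv_smult: "ofv (c *s x) = of_int c *s ofv x"
  by (simp add: ofv_def vector_scalar_mult_def vec_eq_iff)

lemma mv_axis: "(C *v axis j 1) $ i = C $ i $ (j::'n::finite)"
proof -
  have "(C *v axis j 1) $ i = (\<Sum>k\<in>UNIV. C $ i $ k * (if k = j then 1 else 0))"
    by (simp add: matrix_vector_mult_def axis_def)
  also have "\<dots> = C $ i $ j" by (simp add: if_distrib cong: if_cong)
  finally show ?thesis .
qed

lemma adj_exists:
  fixes A :: "int^'n^'n"
  shows "\<exists>y. A *v y = det A *s b"
proof -
  let ?A = "to_rat_mat A"
  define y where "y = (\<chi> k. det (\<chi> i j. if j = k then b$i else A$i$j))"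
  show ?thesis
  proof (cases "det A = 0")
    case True
    then show ?thesis by (intro exI[of _ 0]) (simp add: vector_scalar_mult_def vec_eq_iff)
  next
    case False
    then have d0: "det ?A \<noteq> 0" by (simp add: det_rat)
    define x where "x = (\<chi> k. det (\<chi> i j. if j = k then ofv b $ i else ?A$i$j) / det ?A)"
    have ax: "?A *v x = ofv b" using cramer[OF d0, of x "ofv b"] x_def by simp
    have "(\<chi> i j. if j = k then ofv b $ i else ?A$i$j) = to_rat_mat (\<chi> i j. if j = k then b$i else A$i$j)" for k
      by (simp add: to_rat_mat_def ofv_def vec_eq_iff)
    then have "ofv y = det ?A *s x"
      using d0 by (simp add: y_def x_def ofv_def vec_eq_iff det_rat vector_scalar_mult_def)
    then have "ofv (A *v y) = ofv (det A *s b)"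
      by (simp add: rat_mv[symmetric] vec_smult_mv ax ofv_smult det_rat)
    then show ?thesis using ofv_inj by blast
  qed
qed

lemma p_in_range:
  fixes A :: "int^'n^'n"
  assumes "\<bar>det A\<bar> = int p"
  shows "\<exists>y. A *v y = int p *s b"
proof -
  obtain y where y: "A *v y = det A *s b" using adj_exists by blast
  show ?thesis
  proof (cases "det A \<ge> 0")
    case True then show ?thesis using y assms by auto
  next
    case False
    then have "int p = - det A" using assms by simp
    then have "A *v (- y) = int p *s b" using y
      by (simp add: vec_eq_iff vector_scalar_mult_def matrix_vector_mult_def sum_negf)
    then show ?thesis by blast
  qed
qed

lemma sg_range: "sg (range ((*v) (M::int^'n^'n)))"
  unfolding sg_def
proof (intro conjI ballI)
  show "0 \<in> range ((*v) M)" by (metis matrix_vector_mult_0_right rangeI)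
  fix x y assume "x \<in> range ((*v) M)" "y \<in> range ((*v) M)"
  then obtain u v where "x = M *v u" "y = M *v v" by blast
  then have "x - y = M *v (u - v)" by (simp add: matrix_vector_mult_diff_distrib)
  then show "x - y \<in> range ((*v) M)" by blast
qed

lemma factor_matrix:
  fixes M1 M2 :: "int^'n^'n"
  assumes "range ((*v) M1) \<subseteq> range ((*v) M2)"
  shows "\<exists>U. M1 = M2 ** U"
proof -
  have "\<forall>j. \<exists>w. M2 *v w = M1 *v axis j 1"
  proof
    fix j
    have "M1 *v axis j 1 \<in> range ((*v) M2)" using assms by blast
    then obtain w where "M1 *v axis j 1 = M2 *v w" by (rule rangeE)
    then show "\<exists>w. M2 *v w = M1 *v axis j 1" by metis
  qed
  then obtain w where w: "\<And>j. M2 *v w j = M1 *v axis j 1" by metis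
  define U where "U = (\<chi> i j. w j $ i)"
  have "M2 ** U = M1"
  proof -
    have "(M2 ** U) $ i $ j = M1 $ i $ j" for i j
    proof -
      have "(M2 ** U) $ i $ j = (M2 *v w j) $ i"
        by (simp add: U_def matrix_matrix_mult_def matrix_vector_mult_def)
      also have "\<dots> = M1 $ i $ j" by (simp add: w mv_axis)
      finally show ?thesis .
    qed
    then show ?thesis by (simp add: vec_eq_iff)
  qed
  then show ?thesis by metis
qed

lemma same_range_det:
  fixes M1 M2 :: "int^'n^'n"
  assumes "range ((*v) M1) = range ((*v) M2)" "det M2 \<noteq> 0"
  shows "\<bar>det M1\<bar> = \<bar>det M2\<bar>"
proof -
  obtain U where U: "M1 = M2 ** U" using factor_matrix assms(1) by blast
  obtain V where V: "M2 = M1 ** V" using factor_matrix assms(1) by (metis order_refl)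
  have "det M2 = det M2 * (det U * det V)"
    using U V by (metis det_mul matrix_mul_assoc mult.assoc)
  then have "det U * det V = 1" using assms(2) by simp
  then have "\<bar>det U\<bar> = 1" using zmult_eq_1_iff by (metis abs_1 abs_neg_one)
  then show ?thesis using U by (simp add: det_mul abs_mult)
qed

lemma card_range:
  fixes M :: "int^'n^'n"
  assumes "det M \<noteq> 0"
  shows "finite (cosets (range ((*v) M))) \<and> int (card (cosets (range ((*v) M)))) = \<bar>det M\<bar>"
proof -
  let ?H = "range ((*v) M)"
  have NH: "\<bar>det M\<bar> *s x \<in> ?H" for x
  proof -
    obtain y where "M *v y = \<bar>det M\<bar> *s x" using p_in_range[of M "nat \<bar>det M\<bar>" x] by auto
    then show ?thesis by (metis rangeI)
  qed
  obtain M' where M': "range ((*v) M') = ?H" "finite (cosets ?H)" "int (card (cosets ?H)) = det M'"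
    using lattice_basis[OF sg_range _ NH] assms by auto
  have "\<bar>det M'\<bar> = \<bar>det M\<bar>" by (rule same_range_det[OF M'(1) assms])
  moreover have "det M' \<ge> 0" using M'(3) by linarith
  ultimately show ?thesis using M' by simp
qed

lemma card_cosets_pos:
  assumes "finite (cosets H)"
  shows "card (cosets H) > 0"
  using assms by (auto simp: cosets_def card_gt_0_iff)

lemma coprime_app:
  fixes A B :: "int^'n^'n"
  assumes cop: "coprime_pair A B"
    and sgX: "sg X" and NX: "NX > 0" "\<And>x. NX *s x \<in> X"
    and sgY: "sg Y" and NY: "NY > 0" "\<And>x. NY *s x \<in> Y"
    and AX: "\<And>x. x \<in> X \<Longrightarrow> A *v x \<in> Y"
    and BX: "\<And>x. x \<in> X \<Longrightarrow> B *v x \<in> Y"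
  shows "card (cosets Y) \<le> card (cosets X)"
proof (rule ccontr)
  assume lt: "\<not> ?thesis"
  obtain MX where MX: "range ((*v) MX) = X" "finite (cosets X)" "int (card (cosets X)) = det MX"
    using lattice_basis[OF sgX NX] by blast
  obtain MY where MY: "range ((*v) MY) = Y" "finite (cosets Y)" "int (card (cosets Y)) = det MY"
    using lattice_basis[OF sgY NY] by blast
  have dX: "det MX > 0" using card_cosets_pos[OF MX(2)] MX(3) by linarith
  have dY: "det MX < det MY" using lt MX(3) MY(3) by linarith
  let ?Q = "to_rat_mat MX" and ?Y = "to_rat_mat MY"
  have iQ: "invertible ?Q" using dX by (simp add: invertible_det_nz det_rat)
  have iY: "invertible ?Y" using dX dY by (simp add: invertible_det_nz det_rat)
  then obtain P where P1: "?Y ** P = mat 1" and P2: "P ** ?Y = mat 1" unfolding invertible_def by blast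
  have iP: "invertible P" using P1 P2 unfolding invertible_def by blast
  have dP: "det P * of_int (det MY) = 1" using P2 by (metis det_I det_mul det_rat)
  have dPQ: "det P * det ?Q = of_int (det MX) / of_int (det MY)"
    using dP dX dY by (simp add: det_rat field_simps)
  have pos: "0 < \<bar>det P * det ?Q\<bar>" "\<bar>det P * det ?Q\<bar> < 1"
    using dX dY unfolding dPQ by auto
  have integral: "int_matrix (P ** to_rat_mat C ** ?Q)" if CX: "\<And>x. x \<in> X \<Longrightarrow> C *v x \<in> Y" for C
    unfolding int_matrix_def
  proof (intro allI)
    fix i j
    have "MX *v axis j 1 \<in> X" using MX(1) by blast
    then have "C *v (MX *v axis j 1) \<in> Y" by (rule CX)
    then have "C *v (MX *v axis j 1) \<in> range ((*v) MY)" using MY(1) by simp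
    then obtain w where w0: "C *v (MX *v axis j 1) = MY *v w" by (rule rangeE)
    then have w: "MY *v w = C *v (MX *v axis j 1)" by simp
    have ax: "axis j (1::rat) = ofv (axis j 1)" by (simp add: ofv_def axis_def vec_eq_iff)
    have "(P ** to_rat_mat C ** ?Q) *v axis j 1 = P *v (?Y *v ofv w)"
      by (simp add: ax matrix_vector_mul_assoc[symmetric] rat_mv w)
    also have "\<dots> = ofv w" by (simp add: matrix_vector_mul_assoc P2)
    finally have "(P ** to_rat_mat C ** ?Q) $ i $ j = ofv w $ i" by (metis mv_axis)
    then show "(P ** to_rat_mat C ** ?Q) $ i $ j \<in> \<int>" by (simp add: ofv_def)
  qed
  have "\<exists>P Q :: rat ^ 'n ^ 'n.
          invertible P \<and> invertible Q \<and>
          0 < \<bar>det P * det Q\<bar> \<and> \<bar>det P * det Q\<bar> < 1 \<and>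
          int_matrix (P ** to_rat_mat A ** Q) \<and>
          int_matrix (P ** to_rat_mat B ** Q)"
    using iP iQ pos integral[OF AX] integral[OF BX] by blast
  then show False using cop unfolding coprime_pair_def by blast
qed



lemma sg_UNIV: "sg UNIV" by (simp add: sg_def)

lemma sg_inter: "sg H \<Longrightarrow> sg K \<Longrightarrow> sg (H \<inter> K)" by (simp add: sg_def)

lemma cosets_UNIV_card: "card (cosets (UNIV :: (int^'n) set)) = 1"
proof -
  have "(\<lambda>g. x + g) ` (UNIV::(int^'n) set) = UNIV" for x :: "int^'n"
    by (rule surjI[of _ "\<lambda>y. y - x"]) simp
  then have "cosets (UNIV :: (int^'n) set) = {UNIV}" by (auto simp: cosets_def)
  then show ?thesis by simp
qed

lemma full_of_card1:
  assumes "sg H" "finite (cosets H)" "card (cosets H) \<le> 1"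
  shows "H = (UNIV :: (int^'n) set)"
proof -
  have "x \<in> H" for x
  proof -
    have m1: "(\<lambda>g. x + g) ` H \<in> cosets H"
      unfolding cosets_def by (rule CollectI, rule exI[of _ x], rule conjI, rule refl, rule TrueI)
    have m2: "(\<lambda>g. 0 + g) ` H \<in> cosets H"
      unfolding cosets_def by (rule CollectI, rule exI[of _ 0], rule conjI, rule refl, rule TrueI)
    note m = m1 m2
    have "\<forall>a1\<in>cosets H. \<forall>a2\<in>cosets H. a1 = a2"
      using assms(2,3) card_le_Suc0_iff_eq by (metis One_nat_def)
    then have eq: "(\<lambda>g. x + g) ` H = (\<lambda>g. 0 + g) ` H" using m by blast
    have "x - 0 \<in> H" using coset_eq[OF assms(1), of x 0] eq by blast
    then show ?thesis by simp
  qed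
  then show ?thesis by auto
qed

lemma smult_assoc_int: "(a * b) *s x = a *s (b *s (x::int^'n))"
  by (simp add: vector_scalar_mult_def vec_eq_iff mult.assoc)

lemma in_range: "v \<in> range ((*v) M) \<longleftrightarrow> (\<exists>w. v = M *v w)" by auto

lemma smult_nat2: "int (p * q) *s v = int q *s (int p *s (v::int^'n))"
  by (simp add: vector_scalar_mult_def vec_eq_iff)
lemma smult_nat2': "int (p * q) *s v = int p *s (int q *s (v::int^'n))"
  by (simp add: vector_scalar_mult_def vec_eq_iff)

theorem lemma4p3:
  fixes L1 L2 :: "int ^ 'n ^ 'n" and p q :: nat
  assumes irr: "irreducible_pair L1 L2"
    and cop: "coprime_pair L1 L2"
    and detp: "\<bar>det L1\<bar> = int p" and p_pos: "p > 0"
    and detq: "\<bar>det L2\<bar> = int q" and q_pos: "q > 0"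
  defines "\<Lambda> \<equiv> Lam L1 L2"
    and "\<Gamma> \<equiv> Gamma1 L1 L2"
    and "L1\<Lambda> \<equiv> (\<lambda>y. L1 *v y) ` Lam L1 L2"
  shows "(\<forall>x y. x - y \<in> \<Gamma> \<longrightarrow> L1 *v x - L1 *v y \<in> L1\<Lambda>)
       \<and> (\<forall>x y. x - y \<in> \<Gamma> \<longrightarrow> L2 *v x - L2 *v y \<in> L1\<Lambda>)
       \<and> finite (cosets \<Gamma>) \<and> finite (cosets L1\<Lambda>)
       \<and> (\<forall>x y. (L1 + L2) *v x - (L1 + L2) *v y \<in> L1\<Lambda> \<longleftrightarrow> x - y \<in> \<Gamma>)
       \<and> (\<forall>z. \<exists>x. z - (L1 + L2) *v x \<in> L1\<Lambda>)
       \<and> card (cosets \<Gamma>) = p ^ 2 * q"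
proof -
  let ?AZ = "range ((*v) L1)" and ?BZ = "range ((*v) L2)"
  have dA: "det L1 \<noteq> 0" using detp p_pos by auto
  have dB: "det L2 \<noteq> 0" using detq q_pos by auto
  have pA: "\<exists>y. L1 *v y = int p *s b" for b by (rule p_in_range[OF detp])
  have qB: "\<exists>y. L2 *v y = int q *s b" for b by (rule p_in_range[OF detq])
  have cA: "finite (cosets ?AZ)" "card (cosets ?AZ) = p" using card_range[OF dA] detp by auto
  have cB: "finite (cosets ?BZ)" "card (cosets ?BZ) = q" using card_range[OF dB] detq by auto
  have sgA: "sg ?AZ" and sgB: "sg ?BZ" by (rule sg_range)+
  have pAZ: "int p *s x \<in> ?AZ" for x
  proof -
    obtain y where "L1 *v y = int p *s x" using pA by blast
    then show ?thesis by (metis rangeI)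
  qed
  have qBZ: "int q *s x \<in> ?BZ" for x
  proof -
    obtain y where "L2 *v y = int q *s x" using qB by blast
    then show ?thesis by (metis rangeI)
  qed

  (* Step 1: AZ + BZ = UNIV *)
  define S where "S = {z. \<exists>x y. z = L1 *v x + L2 *v y}"
  have sgS: "sg S"
    unfolding sg_def
  proof (intro conjI ballI)
    show "0 \<in> S" unfolding S_def by (intro CollectI exI[of _ 0]) simp
    fix a c assume "a \<in> S" "c \<in> S"
    then obtain x1 y1 x2 y2 where "a = L1 *v x1 + L2 *v y1" "c = L1 *v x2 + L2 *v y2"
      unfolding S_def by blast
    then have "a - c = L1 *v (x1 - x2) + L2 *v (y1 - y2)"
      by (simp add: matrix_vector_mult_diff_distrib)
    then show "a - c \<in> S" unfolding S_def by blast
  qed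
  have pS: "int p *s x \<in> S" for x
  proof -
    obtain y where "L1 *v y = int p *s x" using pA by blast
    then have "int p *s x = L1 *v y + L2 *v 0" by simp
    then show ?thesis unfolding S_def by blast
  qed
  have pp: "int p > 0" using p_pos by simp
  have qq: "int q > 0" using q_pos by simp
  have finS: "finite (cosets S)" using lattice_basis[OF sgS pp pS] by blast
  have "card (cosets S) \<le> card (cosets (UNIV::(int^'n) set))"
  proof (rule coprime_app[OF cop sg_UNIV _ _ sgS pp pS])
    show "(1::int) > 0" by simp
    show "1 *s x \<in> UNIV" for x :: "int^'n" by simp
    show "L1 *v x \<in> S" for x
    proof -
      have "L1 *v x = L1 *v x + L2 *v 0" by simp
      then show ?thesis unfolding S_def by blast
    qed
    show "L2 *v x \<in> S" for x
    proof -
      have "L2 *v x = L1 *v 0 + L2 *v x" by simp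
      then show ?thesis unfolding S_def by blast
    qed
  qed
  then have c1: "card (cosets S) \<le> 1" by (simp only: cosets_UNIV_card)
  have "S = UNIV" by (rule full_of_card1[OF sgS finS c1])
  then have sumfull: "\<exists>x y. z = L1 *v x + L2 *v y" for z unfolding S_def by blast

  (* Step 2: index of AZ \<inter> BZ *)
  let ?I = "?AZ \<inter> ?BZ"
  have sgI: "sg ?I" by (rule sg_inter[OF sgA sgB])
  define F where "F z = ((\<lambda>g. z + g) ` ?AZ, (\<lambda>g. z + g) ` ?BZ)" for z
  have Feq: "F z = F w \<longleftrightarrow> z - w \<in> ?I" for z w
    using coset_eq[OF sgA] coset_eq[OF sgB] by (simp add: F_def)
  have rF: "range F = cosets ?AZ \<times> cosets ?BZ"
  proof
    show "range F \<subseteq> cosets ?AZ \<times> cosets ?BZ" by (auto simp: F_def cosets_def)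
    show "cosets ?AZ \<times> cosets ?BZ \<subseteq> range F"
    proof
      fix c assume "c \<in> cosets ?AZ \<times> cosets ?BZ"
      then obtain a b where c: "c = ((\<lambda>g. a + g) ` ?AZ, (\<lambda>g. b + g) ` ?BZ)"
        by (auto simp: cosets_def)
      obtain x y where xy: "a - b = L1 *v x + L2 *v y" using sumfull by blast
      define z where "z = a - L1 *v x"
      have z2: "z = b + L2 *v y" using xy unfolding z_def by (simp add: algebra_simps)
      have "z - a = L1 *v (- x)" unfolding z_def by (simp add: vec_eq_iff matrix_vector_mult_def sum_negf)
      then have "z - a \<in> ?AZ" by (metis rangeI)
      then have e1: "(\<lambda>g. z + g) ` ?AZ = (\<lambda>g. a + g) ` ?AZ" using coset_eq[OF sgA] by simp
      have "z - b \<in> ?BZ" using z2 by simp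
      then have e2: "(\<lambda>g. z + g) ` ?BZ = (\<lambda>g. b + g) ` ?BZ" using coset_eq[OF sgB] by simp
      have "F z = c" using e1 e2 c by (simp add: F_def)
      then show "c \<in> range F" by (metis rangeI)
    qed
  qed
  have cmI: "card (cosets ?I) = card (range F) \<and> (finite (cosets ?I) \<longleftrightarrow> finite (range F))"
    by (rule card_cosets_map[OF sgI Feq])
  have crF: "card (range F) = p * q" unfolding rF using cA cB by (simp add: card_cartesian_product)
  have frF: "finite (range F)" unfolding rF using cA cB by simp
  have cI: "card (cosets ?I) = p * q" "finite (cosets ?I)" using cmI crF frF by simp_all
  have pqI: "int (p * q) *s x \<in> ?I" for x
  proof -
    have a: "int (p * q) *s x \<in> ?AZ" unfolding smult_nat2' by (rule pAZ)
    have b: "int (p * q) *s x \<in> ?BZ" unfolding smult_nat2 by (rule qBZ)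
    show ?thesis using a b by blast
  qed
  have pq: "int (p * q) > 0" using p_pos q_pos by simp

  (* Step 3: Lambda *)
  have Lmem: "x \<in> \<Lambda> \<longleftrightarrow> (\<exists>y. L1 *v x = L2 *v y) \<and> (\<exists>y. L2 *v x = L1 *v y)" for x
    by (simp add: \<Lambda>_def Lam_def)
  have sgL: "sg \<Lambda>"
    unfolding sg_def
  proof (intro conjI ballI)
    have "L1 *v 0 = L2 *v 0" "L2 *v 0 = L1 *v 0" by simp_all
    then show "0 \<in> \<Lambda>" unfolding Lmem by blast
    fix a c assume "a \<in> \<Lambda>" "c \<in> \<Lambda>"
    then obtain y1 y2 y3 y4 where "L1 *v a = L2 *v y1" "L2 *v a = L1 *v y2"
        "L1 *v c = L2 *v y3" "L2 *v c = L1 *v y4" unfolding Lmem by blast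
    then have "L1 *v (a - c) = L2 *v (y1 - y3)" "L2 *v (a - c) = L1 *v (y2 - y4)"
      by (simp_all add: matrix_vector_mult_diff_distrib)
    then show "a - c \<in> \<Lambda>" unfolding Lmem by blast
  qed
  have pqL: "int (p * q) *s x \<in> \<Lambda>" for x
  proof -
    obtain y1 where y1: "L2 *v y1 = int q *s (int p *s (L1 *v x))" using qB by blast
    obtain y2 where y2: "L1 *v y2 = int p *s (int q *s (L2 *v x))" using pA by blast
    have "L1 *v (int (p * q) *s x) = L2 *v y1"
      unfolding y1 vec_smult_mv by (rule smult_nat2)
    moreover have "L2 *v (int (p * q) *s x) = L1 *v y2"
      unfolding y2 vec_smult_mv by (rule smult_nat2')
    ultimately show ?thesis unfolding Lmem by blast
  qed
  define G where "G x = ((\<lambda>g. L1 *v x + g) ` ?BZ, (\<lambda>g. L2 *v x + g) ` ?AZ)" for x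
  have Geq: "G x = G y \<longleftrightarrow> x - y \<in> \<Lambda>" for x y
  proof -
    have "G x = G y \<longleftrightarrow> L1 *v x - L1 *v y \<in> ?BZ \<and> L2 *v x - L2 *v y \<in> ?AZ"
      using coset_eq[OF sgA] coset_eq[OF sgB] by (simp add: G_def)
    also have "\<dots> \<longleftrightarrow> x - y \<in> \<Lambda>"
      unfolding Lmem in_range matrix_vector_mult_diff_distrib[symmetric] by (rule refl)
    finally show ?thesis .
  qed
  have rG: "range G \<subseteq> cosets ?BZ \<times> cosets ?AZ" by (auto simp: G_def cosets_def)
  have finG: "finite (cosets ?BZ \<times> cosets ?AZ)" using cA cB by simp
  have cmL: "card (cosets \<Lambda>) = card (range G) \<and> (finite (cosets \<Lambda>) \<longleftrightarrow> finite (range G))"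
    by (rule card_cosets_map[OF sgL Geq])
  have "card (range G) \<le> card (cosets ?BZ \<times> cosets ?AZ)" by (rule card_mono[OF finG rG])
  then have crG: "card (range G) \<le> q * p" using cA cB by (simp add: card_cartesian_product)
  have frG: "finite (range G)" by (rule finite_subset[OF rG finG])
  have cL1: "card (cosets \<Lambda>) \<le> q * p" "finite (cosets \<Lambda>)" using cmL crG frG by simp_all
  have "card (cosets ?I) \<le> card (cosets \<Lambda>)"
  proof (rule coprime_app[OF cop sgL pq pqL sgI pq pqI])
    fix x assume "x \<in> \<Lambda>"
    then obtain y1 y2 where "L1 *v x = L2 *v y1" "L2 *v x = L1 *v y2" unfolding Lmem by blast
    then show "L1 *v x \<in> ?I" "L2 *v x \<in> ?I" by (metis IntI rangeI)+
  qed
  then have cL: "card (cosets \<Lambda>) = p * q" using cL1(1) cI(1) mult.commute[of q p] by linarith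

  (* Step 4: L1 Lambda *)
  obtain Lb where Lb: "range ((*v) Lb) = \<Lambda>" "finite (cosets \<Lambda>)" "int (card (cosets \<Lambda>)) = det Lb"
    using lattice_basis[OF sgL pq pqL] by blast
  have L1L: "L1\<Lambda> = range ((*v) (L1 ** Lb))"
  proof -
    have "L1\<Lambda> = (\<lambda>y. L1 *v y) ` range ((*v) Lb)" using Lb(1) by (simp add: L1\<Lambda>_def \<Lambda>_def)
    also have "\<dots> = range ((*v) (L1 ** Lb))"
    proof -
      have fe: "(\<lambda>y. L1 *v y) \<circ> (*v) Lb = (*v) (L1 ** Lb)"
        by (rule ext) (simp add: matrix_vector_mul_assoc)
      show ?thesis by (simp only: image_comp fe)
    qed
    finally show ?thesis .
  qed
  have dML: "det Lb = int (p * q)" using Lb(3) cL by simp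
  have dAL: "det (L1 ** Lb) \<noteq> 0" using dA dML p_pos q_pos by (simp add: det_mul)
  have absAL: "\<bar>det (L1 ** Lb)\<bar> = int (p * (p * q))" using detp dML by (simp add: det_mul abs_mult)
  have cAL: "finite (cosets L1\<Lambda>)" "card (cosets L1\<Lambda>) = p * (p * q)"
  proof -
    have cr: "finite (cosets (range ((*v) (L1 ** Lb)))) \<and>
        int (card (cosets (range ((*v) (L1 ** Lb))))) = \<bar>det (L1 ** Lb)\<bar>"
      by (rule card_range[OF dAL])
    show "finite (cosets L1\<Lambda>)" using cr unfolding L1L by simp
    have "int (card (cosets L1\<Lambda>)) = int (p * (p * q))" using cr unfolding L1L absAL by simp
    then show "card (cosets L1\<Lambda>) = p * (p * q)" by (simp only: of_nat_eq_iff)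
  qed
  have sgAL: "sg L1\<Lambda>" unfolding L1L by (rule sg_range)
  have NAL: "int (p * (p * q)) *s x \<in> L1\<Lambda>" for x
  proof -
    obtain y where "(L1 ** Lb) *v y = int (p * (p * q)) *s x" using p_in_range[OF absAL] by blast
    then show ?thesis unfolding L1L by (metis rangeI)
  qed
  have ALmem: "z \<in> L1\<Lambda> \<longleftrightarrow> (\<exists>l\<in>\<Lambda>. z = L1 *v l)" for z
    by (auto simp: L1\<Lambda>_def \<Lambda>_def)

  (* Step 5: Gamma *)
  have Gmem: "x \<in> \<Gamma> \<longleftrightarrow> x \<in> \<Lambda> \<and> (\<exists>y\<in>\<Lambda>. L2 *v x = L1 *v y)" for x
    by (simp add: \<Gamma>_def Gamma1_def \<Lambda>_def)
  have sgGa: "sg \<Gamma>"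
    unfolding sg_def
  proof (intro conjI ballI)
    show "0 \<in> \<Gamma>" unfolding Gmem using sg_0[OF sgL] by (metis matrix_vector_mult_0_right)
    fix a c assume "a \<in> \<Gamma>" "c \<in> \<Gamma>"
    then obtain y1 y2 where h: "a \<in> \<Lambda>" "c \<in> \<Lambda>" "y1 \<in> \<Lambda>" "y2 \<in> \<Lambda>"
      "L2 *v a = L1 *v y1" "L2 *v c = L1 *v y2" unfolding Gmem by blast
    have "L2 *v (a - c) = L1 *v (y1 - y2)" using h by (simp add: matrix_vector_mult_diff_distrib)
    then show "a - c \<in> \<Gamma>" unfolding Gmem using sg_diff[OF sgL] h by blast
  qed
  have NGa: "int (p * q * (p * q)) *s x \<in> \<Gamma>" for x
  proof -
    have inL: "int (p * q * (p * q)) *s x \<in> \<Lambda>"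
      unfolding smult_nat2'[of "p * q" "p * q"] by (rule pqL)
    obtain u where u: "L1 *v u = int p *s (int q *s (L2 *v x))" using pA by blast
    have yL: "int (p * q) *s u \<in> \<Lambda>" by (rule pqL)
    have "L2 *v (int (p * q * (p * q)) *s x) = L1 *v (int (p * q) *s u)"
      by (simp only: vec_smult_mv u smult_nat2')
    then show ?thesis unfolding Gmem using inL yL by blast
  qed
  have pq2: "int (p * q * (p * q)) > 0" using p_pos q_pos by simp
  have kerz: "L1 *v z + L2 *v z \<in> L1\<Lambda> \<longleftrightarrow> z \<in> \<Gamma>" for z
  proof
    assume "L1 *v z + L2 *v z \<in> L1\<Lambda>"
    then obtain l where l: "l \<in> \<Lambda>" "L1 *v z + L2 *v z = L1 *v l" unfolding ALmem by blast
    then obtain w0 where w0: "L1 *v l = L2 *v w0" unfolding Lmem by blast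
    have e1: "L1 *v z = L2 *v (w0 - z)"
      using l(2) w0 by (simp add: matrix_vector_mult_diff_distrib algebra_simps)
    have e2: "L2 *v z = L1 *v (l - z)"
      using l(2) by (simp add: matrix_vector_mult_diff_distrib algebra_simps)
    have zL: "z \<in> \<Lambda>" unfolding Lmem using e1 e2 by blast
    have "l - z \<in> \<Lambda>" by (rule sg_diff[OF sgL l(1) zL])
    then show "z \<in> \<Gamma>" unfolding Gmem using zL e2 by blast
  next
    assume "z \<in> \<Gamma>"
    then obtain y' where h: "z \<in> \<Lambda>" "y' \<in> \<Lambda>" "L2 *v z = L1 *v y'" unfolding Gmem by blast
    have "L1 *v z + L2 *v z = L1 *v (z + y')" using h(3) by (simp add: matrix_vector_right_distrib)
    moreover have "z + y' \<in> \<Lambda>" by (rule sg_add[OF sgL h(1,2)])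
    ultimately show "L1 *v z + L2 *v z \<in> L1\<Lambda>" unfolding ALmem by blast
  qed
  have ker: "(L1 + L2) *v x - (L1 + L2) *v y \<in> L1\<Lambda> \<longleftrightarrow> x - y \<in> \<Gamma>" for x y
  proof -
    have "(L1 + L2) *v x - (L1 + L2) *v y = L1 *v (x - y) + L2 *v (x - y)"
      by (simp add: matrix_vector_mult_add_rdistrib matrix_vector_mult_diff_distrib algebra_simps)
    then show ?thesis using kerz by simp
  qed
  define Fm where "Fm x = (\<lambda>g. (L1 + L2) *v x + g) ` L1\<Lambda>" for x
  have Fmeq: "Fm x = Fm y \<longleftrightarrow> x - y \<in> \<Gamma>" for x y
    using coset_eq[OF sgAL] ker by (simp add: Fm_def)
  have rFm: "range Fm \<subseteq> cosets L1\<Lambda>" by (auto simp: Fm_def cosets_def)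
  have cGa1: "card (cosets \<Gamma>) = card (range Fm)" "finite (cosets \<Gamma>) \<longleftrightarrow> finite (range Fm)"
    using card_cosets_map[OF sgGa Fmeq] by auto
  have finFm: "finite (range Fm)" using rFm cAL(1) by (rule finite_subset)
  have le1: "card (range Fm) \<le> card (cosets L1\<Lambda>)" by (rule card_mono[OF cAL(1) rFm])
  have le2: "card (cosets L1\<Lambda>) \<le> card (cosets \<Gamma>)"
  proof (rule coprime_app[OF cop sgGa pq2 NGa sgAL _ NAL])
    show "int (p * (p * q)) > 0" using p_pos q_pos by simp
    fix x assume "x \<in> \<Gamma>"
    then obtain y' where h: "x \<in> \<Lambda>" "y' \<in> \<Lambda>" "L2 *v x = L1 *v y'" unfolding Gmem by blast
    show "L1 *v x \<in> L1\<Lambda>" unfolding ALmem using h by blast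
    show "L2 *v x \<in> L1\<Lambda>" unfolding ALmem using h by blast
  qed
  have eqc: "card (range Fm) = card (cosets L1\<Lambda>)" using le1 le2 cGa1 by simp
  have rFm_eq: "range Fm = cosets L1\<Lambda>" by (rule card_subset_eq[OF cAL(1) rFm eqc])
  have surj: "\<exists>x. z - (L1 + L2) *v x \<in> L1\<Lambda>" for z
  proof -
    have "(\<lambda>g. z + g) ` L1\<Lambda> \<in> range Fm" unfolding rFm_eq by (auto simp: cosets_def)
    then obtain x where "Fm x = (\<lambda>g. z + g) ` L1\<Lambda>" by auto
    then have "(L1 + L2) *v x - z \<in> L1\<Lambda>" using coset_eq[OF sgAL] by (simp add: Fm_def)
    then have "- ((L1 + L2) *v x - z) \<in> L1\<Lambda>" by (rule sg_uminus[OF sgAL])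
    then show ?thesis by auto
  qed
  have part1: "\<forall>x y. x - y \<in> \<Gamma> \<longrightarrow> L1 *v x - L1 *v y \<in> L1\<Lambda>"
  proof (intro allI impI)
    fix x y assume "x - y \<in> \<Gamma>"
    then have "x - y \<in> \<Lambda>" unfolding Gmem by blast
    then show "L1 *v x - L1 *v y \<in> L1\<Lambda>" unfolding ALmem
      by (intro bexI[of _ "x - y"]) (simp_all add: matrix_vector_mult_diff_distrib)
  qed
  have part2: "\<forall>x y. x - y \<in> \<Gamma> \<longrightarrow> L2 *v x - L2 *v y \<in> L1\<Lambda>"
  proof (intro allI impI)
    fix x y assume "x - y \<in> \<Gamma>"
    then obtain y' where "y' \<in> \<Lambda>" "L2 *v (x - y) = L1 *v y'" unfolding Gmem by blast
    then show "L2 *v x - L2 *v y \<in> L1\<Lambda>" unfolding ALmem by (auto simp: matrix_vector_mult_diff_distrib)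
  qed
  have cardG: "card (cosets \<Gamma>) = p ^ 2 * q" using cGa1 eqc cAL(2) by (simp add: power2_eq_square)
  have finGa: "finite (cosets \<Gamma>)" using cGa1(2) finFm by simp
  show ?thesis
  proof (intro conjI)
    show "\<forall>x y. x - y \<in> \<Gamma> \<longrightarrow> L1 *v x - L1 *v y \<in> L1\<Lambda>" by (rule part1)
    show "\<forall>x y. x - y \<in> \<Gamma> \<longrightarrow> L2 *v x - L2 *v y \<in> L1\<Lambda>" by (rule part2)
    show "finite (cosets \<Gamma>)" by (rule finGa)
    show "finite (cosets L1\<Lambda>)" by (rule cAL(1))
    show "\<forall>x y. (L1 + L2) *v x - (L1 + L2) *v y \<in> L1\<Lambda> \<longleftrightarrow> x - y \<in> \<Gamma>" using ker by blast
    show "\<forall>z. \<exists>x. z - (L1 + L2) *v x \<in> L1\<Lambda>" using surj by blast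
    show "card (cosets \<Gamma>) = p ^ 2 * q" by (rule cardG)
  qed
qed

end
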